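(* The non-orientable genus of $K_6^3$ is $6$, i.e. $\widetilde{\mathsf{g}}(K_6^3)=6$.
   Context: $K_6^3$ is the complete $3$-uniform hypergraph on $\{1,\dots,6\}$ (edges: all $20$ triples). Its non-orientable genus is the non-orientable genus of its Levi graph, the bipartite graph with vertex set $[6]\sqcup\binom{[6]}{3}$ in which $i$ is adjacent to a triple $t$ iff $i\in t$. The non-orientable genus of a graph is the minimum $c$ such that it embeds in the non-orientable surface with $c$ crosscaps. *)

theory Defs
  imports Main "HOL-Combinatorics.Permutations"
begin

text \<open>Embeddings into surfaces are encoded combinatorially by general rotation systems
  (embedding schemes, Mohar--Thomassen): a rotation (cyclic permutation of the
  neighbours) at each vertex plus an edge signature (twisted / untwisted).\<close>

definition nbrs :: "'a set set \<Rightarrow> 'a \<Rightarrow> 'a set" where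
  "nbrs E v = {u. {v, u} \<in> E}"

definition is_rotation :: "'a set \<Rightarrow> 'a set set \<Rightarrow> ('a \<Rightarrow> 'a \<Rightarrow> 'a) \<Rightarrow> bool" where
  "is_rotation V E rot \<longleftrightarrow>
     (\<forall>v\<in>V. rot v permutes nbrs E v \<and>
        (\<forall>u\<in>nbrs E v. \<forall>w\<in>nbrs E v. \<exists>k. (rot v ^^ k) u = w))"

text \<open>Flags: (v, u, s) for a dart v->u (i.e. an edge {v,u}) and a side s
  (True = left of the dart w.r.t. the local rotation at v).\<close>

definition flags :: "'a set set \<Rightarrow> ('a \<times> 'a \<times> bool) set" where
  "flags E = {(v, u, s). {v, u} \<in> E}"

definition tau0 :: "('a set \<Rightarrow> bool) \<Rightarrow> 'a \<times> 'a \<times> bool \<Rightarrow> 'a \<times> 'a \<times> bool" where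
  "tau0 tw x = (case x of (v, u, s) \<Rightarrow> (u, v, if tw {v, u} then s else \<not> s))"

text \<open>Move across the corner at v.\<close>
definition tau1 :: "('a \<Rightarrow> 'a \<Rightarrow> 'a) \<Rightarrow> 'a \<times> 'a \<times> bool \<Rightarrow> 'a \<times> 'a \<times> bool" where
  "tau1 rot x = (case x of (v, u, s) \<Rightarrow>
      (if s then (v, rot v u, False) else (v, inv (rot v) u, True)))"

definition face_rel ::
  "'a set set \<Rightarrow> ('a \<Rightarrow> 'a \<Rightarrow> 'a) \<Rightarrow> ('a set \<Rightarrow> bool) \<Rightarrow> (('a \<times> 'a \<times> bool) \<times> ('a \<times> 'a \<times> bool)) set" where
  "face_rel E rot tw =
     {(x, y). x \<in> flags E \<and> y \<in> flags E \<and>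
        (x, y) \<in> ({(z, tau0 tw z) | z. z \<in> flags E} \<union> {(z, tau1 rot z) | z. z \<in> flags E})\<^sup>*}"

definition num_faces :: "'a set set \<Rightarrow> ('a \<Rightarrow> 'a \<Rightarrow> 'a) \<Rightarrow> ('a set \<Rightarrow> bool) \<Rightarrow> nat" where
  "num_faces E rot tw = card (flags E // face_rel E rot tw)"

definition euler_genus :: "'a set \<Rightarrow> 'a set set \<Rightarrow> ('a \<Rightarrow> 'a \<Rightarrow> 'a) \<Rightarrow> ('a set \<Rightarrow> bool) \<Rightarrow> int" where
  "euler_genus V E rot tw = 2 - int (card V) + int (card E) - int (num_faces E rot tw)"

text \<open>The embedding is non-orientable iff the signature is not switching-equivalent
  to the all-untwisted one (i.e. some cycle has an odd number of twisted edges).\<close>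
definition nonorientable_scheme :: "'a set \<Rightarrow> 'a set set \<Rightarrow> ('a set \<Rightarrow> bool) \<Rightarrow> bool" where
  "nonorientable_scheme V E tw \<longleftrightarrow>
     \<not> (\<exists>\<sigma> :: 'a \<Rightarrow> bool. \<forall>u v. {u, v} \<in> E \<longrightarrow> (tw {u, v} \<longleftrightarrow> \<sigma> u \<noteq> \<sigma> v))"

definition nonorientable_genus :: "'a set \<Rightarrow> 'a set set \<Rightarrow> nat" where
  "nonorientable_genus V E =
     (LEAST c. \<exists>rot tw. is_rotation V E rot \<and> nonorientable_scheme V E tw \<and>
                   int c = euler_genus V E rot tw)"

definition levi_vertices :: "'a set \<Rightarrow> 'a set set \<Rightarrow> ('a + 'a set) set" where
  "levi_vertices X H = Inl ` X \<union> Inr ` H"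

definition levi_edges :: "'a set \<Rightarrow> 'a set set \<Rightarrow> ('a + 'a set) set set" where
  "levi_edges X H = {{Inl i, Inr t} | i t. i \<in> X \<and> t \<in> H \<and> i \<in> t}"

definition hypergraph_nonorientable_genus :: "'a set \<Rightarrow> 'a set set \<Rightarrow> nat" where
  "hypergraph_nonorientable_genus X H =
     nonorientable_genus (levi_vertices X H) (levi_edges X H)"

definition K63_vertices :: "nat set" where "K63_vertices = {1..6}"
definition K63_edges :: "nat set set" where
  "K63_edges = {t. t \<subseteq> {1..6} \<and> card t = 3}"

end

theory Submission
  imports Defs
begin

definition cyc :: "'b list \<Rightarrow> 'b \<Rightarrow> 'b" where
  "cyc L x = (case map_of (zip L (rotate1 L)) x of None \<Rightarrow> x | Some y \<Rightarrow> y)"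

lemma cyc_out: "x \<notin> set L \<Longrightarrow> cyc L x = x"
proof -
  assume "x \<notin> set L"
  then have h: "map_of (zip L (rotate1 L)) x = None" by (simp add: map_of_zip_is_None)
  show ?thesis unfolding cyc_def by (simp only: h option.case)
qed

lemma cyc_nth: "distinct L \<Longrightarrow> i < length L \<Longrightarrow> cyc L (L ! i) = L ! (Suc i mod length L)"
  unfolding cyc_def by (simp add: map_of_zip_nth nth_rotate1)

lemma cyc_pow: "distinct L \<Longrightarrow> i < length L \<Longrightarrow> (cyc L ^^ k) (L ! i) = L ! ((i + k) mod length L)"
proof (induction k)
  case 0 then show ?case by simp
next
  case (Suc k)
  have "(cyc L ^^ Suc k) (L ! i) = cyc L (L ! ((i + k) mod length L))" using Suc by simp
  also have "\<dots> = L ! (Suc ((i + k) mod length L) mod length L)"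
    using Suc.prems by (intro cyc_nth) (auto intro: mod_less_divisor)
  also have "Suc ((i + k) mod length L) mod length L = (i + Suc k) mod length L"
    by (simp add: mod_Suc_eq)
  finally show ?case .
qed

lemma cyc_trans: "distinct L \<Longrightarrow> u \<in> set L \<Longrightarrow> w \<in> set L \<Longrightarrow> \<exists>k. (cyc L ^^ k) u = w"
proof -
  assume d: "distinct L" and u: "u \<in> set L" and w: "w \<in> set L"
  obtain i where i: "i < length L" "u = L ! i" using u by (auto simp: in_set_conv_nth)
  obtain j where j: "j < length L" "w = L ! j" using w by (auto simp: in_set_conv_nth)
  have "(cyc L ^^ (j + length L - i)) u = L ! ((i + (j + length L - i)) mod length L)"
    using cyc_pow[OF d i(1)] i by simp
  also have "(i + (j + length L - i)) mod length L = j" using i j by simp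
  finally show ?thesis using j by blast
qed

lemma cyc_rev_cyc: "distinct L \<Longrightarrow> cyc (rev L) (cyc L x) = x"
proof (cases "x \<in> set L")
  case False
  assume d: "distinct L"
  then show ?thesis using False by (simp add: cyc_out)
next
  case True
  assume d: "distinct L"
  define n where "n = length L"
  obtain i where i: "i < n" "x = L ! i" using True by (auto simp: in_set_conv_nth n_def)
  have dr: "distinct (rev L)" using d by simp
  show ?thesis
  proof (cases "Suc i < n")
    case True
    have "cyc L x = L ! Suc i" using cyc_nth[OF d, of i] i True by (simp add: n_def)
    also have "\<dots> = rev L ! (n - 2 - i)" using True by (simp add: rev_nth n_def)
    finally have "cyc (rev L) (cyc L x) = rev L ! (Suc (n - 2 - i) mod n)"
      using cyc_nth[OF dr, of "n - 2 - i"] True by (simp add: n_def)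
    also have "Suc (n - 2 - i) mod n = n - 1 - i" using True by simp
    also have "rev L ! (n - 1 - i) = L ! i" using i by (simp add: rev_nth n_def)
    finally show ?thesis using i by simp
  next
    case False
    then have ii: "i = n - 1" using i by simp
    have "Suc (n - 1) = n" using i by simp
    then have "cyc L x = L ! 0" using cyc_nth[OF d, of i] i ii by (simp add: n_def)
    also have "\<dots> = rev L ! (n - 1)" using i by (simp add: rev_nth n_def)
    finally have "cyc (rev L) (cyc L x) = rev L ! (Suc (n - 1) mod n)"
      using cyc_nth[OF dr, of "n - 1"] i by (simp add: n_def)
    also have "Suc (n - 1) mod n = 0" using i by simp
    also have "rev L ! 0 = L ! i" using i ii rev_nth[of 0 L] by (cases L) (simp_all add: n_def)
    finally show ?thesis using i by simp
  qed
qed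

lemma inv_cyc: "distinct L \<Longrightarrow> inv (cyc L) = cyc (rev L)"
  by (rule inv_equality) (use cyc_rev_cyc[of L] cyc_rev_cyc[of "rev L"] in auto)

lemma cyc_permutes: "distinct L \<Longrightarrow> cyc L permutes set L"
  unfolding permutes_def
proof (intro conjI allI impI)
  fix x assume "distinct L" "x \<notin> set L" then show "cyc L x = x" by (simp add: cyc_out)
next
  fix y assume d: "distinct L"
  show "\<exists>!x. cyc L x = y"
  proof (rule ex1I[of _ "cyc (rev L) y"])
    show "cyc L (cyc (rev L) y) = y" using cyc_rev_cyc[of "rev L" y] d by simp
    fix x assume "cyc L x = y"
    then show "x = cyc (rev L) y" using cyc_rev_cyc[OF d, of x] by simp
  qed
qed

lemma map_of_map_inj:
  "inj f \<Longrightarrow> map_of (map (\<lambda>(a, b). (f a, f b)) ps) (f x) = map_option f (map_of ps x)"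
  by (induction ps) (auto simp: inj_eq)

lemma cyc_map: "inj f \<Longrightarrow> cyc (map f L) (f x) = f (cyc L x)"
  unfolding cyc_def rotate1_map zip_map_map
  by (auto simp add: map_of_map_inj split: option.split dest!: map_of_SomeD set_zip_leftD)

lemma tau0_simp: "tau0 tw (v, u, s) = (u, v, if tw {v, u} then s else \<not> s)"
  by (simp add: tau0_def)

lemma tau1_simp: "tau1 rot (v, u, s) = (if s then (v, rot v u, False) else (v, inv (rot v) u, True))"
  by (simp add: tau1_def)

lemma tau0_tau0: "tau0 tw (tau0 tw x) = x"
  by (cases x) (auto simp: tau0_def insert_commute)

lemma tau0_flags: "x \<in> flags E \<Longrightarrow> tau0 tw x \<in> flags E"
  by (cases x) (auto simp: tau0_def flags_def insert_commute)

lemma card_flags: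
  assumes fin: "finite E" and E2: "\<forall>e\<in>E. \<exists>a b. a \<noteq> b \<and> e = {a, b}"
  shows "card (flags E) = 4 * card E"
proof -
  define D where "D = {(v, u). {v, u} \<in> E}"
  define A :: "'a set \<Rightarrow> ('a \<times> 'a) set" where "A e = {(v, u). {v, u} = e}" for e
  have D: "D = (\<Union>e\<in>E. A e)" unfolding D_def A_def by blast
  have Ae: "A {a, b} = {(a, b), (b, a)}" if "a \<noteq> b" for a b
    using that unfolding A_def by (auto simp: doubleton_eq_iff)
  have cA: "card (A e) = 2" if eE: "e \<in> E" for e
  proof -
    obtain a b where ab: "a \<noteq> b" "e = {a, b}" using bspec[OF E2 eE] by blast
    have "A e = {(a, b), (b, a)}" using ab Ae by simp
    then show ?thesis using ab by simp
  qed
  have fA: "finite (A e)" if eE: "e \<in> E" for e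
  proof -
    obtain a b where ab: "a \<noteq> b" "e = {a, b}" using bspec[OF E2 eE] by blast
    have "A e = {(a, b), (b, a)}" using ab Ae by simp
    then show ?thesis using ab by simp
  qed
  have "card D = (\<Sum>e\<in>E. card (A e))"
    unfolding D
  proof (rule card_UN_disjoint)
    show "finite E" by (rule fin)
    show "\<forall>i\<in>E. finite (A i)" using fA by blast
    show "\<forall>i\<in>E. \<forall>j\<in>E. i \<noteq> j \<longrightarrow> A i \<inter> A j = {}" unfolding A_def by auto
  qed
  also have "\<dots> = 2 * card E" using cA by simp
  finally have cD: "card D = 2 * card E" .
  have fD: "finite D" unfolding D using fin fA by simp
  have "flags E = (\<lambda>(p, s). (fst p, snd p, s)) ` (D \<times> UNIV)"
    unfolding flags_def D_def by (auto simp: image_def)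
  moreover have "inj_on (\<lambda>(p, s). (fst p, snd p, s)) (D \<times> (UNIV :: bool set))"
    by (auto simp: inj_on_def prod_eq_iff)
  ultimately have "card (flags E) = card (D \<times> (UNIV :: bool set))"
    by (simp add: card_image)
  also have "\<dots> = 2 * card D" using fD by (simp add: card_cartesian_product)
  finally show ?thesis using cD by simp
qed

locale emb =
  fixes V :: "'a set" and E :: "'a set set" and rot :: "'a \<Rightarrow> 'a \<Rightarrow> 'a" and tw :: "'a set \<Rightarrow> bool"
  assumes finE: "finite E"
    and E2: "\<forall>e\<in>E. \<exists>a b. a \<noteq> b \<and> e = {a, b}"
    and EV: "\<And>a b. {a, b} \<in> E \<Longrightarrow> a \<in> V"
    and rotn: "is_rotation V E rot"
begin

abbreviation "Fl \<equiv> flags E"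
abbreviation "T0 \<equiv> tau0 tw"
abbreviation "T1 \<equiv> tau1 rot"
abbreviation "FR \<equiv> face_rel E rot tw"
abbreviation "RR \<equiv> {(z, T0 z) | z. z \<in> Fl} \<union> {(z, T1 z) | z. z \<in> Fl}"

lemma perm: "v \<in> V \<Longrightarrow> rot v permutes nbrs E v"
  using rotn by (simp add: is_rotation_def)

lemma T1_flags: "x \<in> Fl \<Longrightarrow> T1 x \<in> Fl"
proof -
  assume x: "x \<in> Fl"
  obtain v u s where xe: "x = (v, u, s)" by (cases x)
  have vu: "{v, u} \<in> E" using x xe by (simp add: flags_def)
  then have v: "v \<in> V" using EV by blast
  have u: "u \<in> nbrs E v" using vu by (simp add: nbrs_def)
  have p: "rot v permutes nbrs E v" using perm v .
  have "rot v u \<in> nbrs E v" using p u by (simp add: permutes_in_image)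
  moreover have "inv (rot v) u \<in> nbrs E v" using permutes_inv[OF p] u by (simp add: permutes_in_image)
  ultimately show ?thesis using xe by (auto simp: tau1_def flags_def nbrs_def)
qed

lemma T1_T1: "x \<in> Fl \<Longrightarrow> T1 (T1 x) = x"
proof -
  assume x: "x \<in> Fl"
  obtain v u s where xe: "x = (v, u, s)" by (cases x)
  have vu: "{v, u} \<in> E" using x xe by (simp add: flags_def)
  then have v: "v \<in> V" using EV by blast
  have p: "rot v permutes nbrs E v" using perm v .
  show ?thesis using xe permutes_inverses[OF p] by (auto simp: tau1_def)
qed

lemma finFl: "finite Fl"
proof -
  have "finite (\<Union>E)" using finE E2 by auto
  moreover have "Fl \<subseteq> (\<Union>E) \<times> (\<Union>E) \<times> UNIV" by (auto simp: flags_def)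
  ultimately show ?thesis by (simp add: finite_subset)
qed

lemma RR_sym: "sym RR"
proof (rule symI)
  fix a b assume "(a, b) \<in> RR"
  then show "(b, a) \<in> RR"
  proof
    assume "(a, b) \<in> {(z, T0 z) | z. z \<in> Fl}"
    then have "b = T0 a" "a \<in> Fl" by auto
    then show ?thesis using tau0_tau0[of tw a] tau0_flags[of a E tw] by force
  next
    assume "(a, b) \<in> {(z, T1 z) | z. z \<in> Fl}"
    then have "b = T1 a" "a \<in> Fl" by auto
    then show ?thesis using T1_T1[of a] T1_flags[of a] by force
  qed
qed

lemma FR_equiv: "equiv Fl FR"
  unfolding equiv_def
proof (intro conjI)
  show "FR \<subseteq> Fl \<times> Fl" by (auto simp: face_rel_def)
  show "refl_on Fl FR" by (auto simp: refl_on_def face_rel_def)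
  show "sym FR"
    using sym_rtrancl[OF RR_sym] by (auto simp: face_rel_def sym_def)
  show "trans FR"
    by (auto simp: trans_def face_rel_def intro: rtrancl_trans)
qed

lemma class_closed:
  assumes "(y, x) \<in> FR" shows "(y, T0 x) \<in> FR" "(y, T1 x) \<in> FR"
proof -
  have x: "x \<in> Fl" and y: "y \<in> Fl" and r: "(y, x) \<in> RR\<^sup>*" using assms by (auto simp: face_rel_def)
  have "(x, T0 x) \<in> RR" using x by blast
  from rtrancl_into_rtrancl[OF r this]
  show "(y, T0 x) \<in> FR" using y tau0_flags[OF x] unfolding face_rel_def by blast
  have "(x, T1 x) \<in> RR" using x by blast
  from rtrancl_into_rtrancl[OF r this]
  show "(y, T1 x) \<in> FR" using y T1_flags[OF x] unfolding face_rel_def by blast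
qed

lemma class_sub:
  assumes S: "x \<in> S" "\<And>y. y \<in> S \<Longrightarrow> T0 y \<in> S" "\<And>y. y \<in> S \<Longrightarrow> T1 y \<in> S"
  shows "FR `` {x} \<subseteq> S"
proof
  fix y assume "y \<in> FR `` {x}"
  then have "(x, y) \<in> RR\<^sup>*" by (auto simp: face_rel_def)
  then show "y \<in> S"
    by (induction rule: rtrancl_induct) (use S in auto)
qed

lemma sum_classes: "card Fl = (\<Sum>X\<in>Fl // FR. card X)"
proof -
  have "card Fl = card (\<Union>(Fl // FR))" using Union_quotient[OF FR_equiv] by simp
  also have "\<dots> = (\<Sum>X\<in>Fl // FR. card X)"
  proof (rule card_Union_disjoint)
    show "disjoint (Fl // FR)" using quotient_disj[OF FR_equiv]
      by (auto simp: disjoint_def)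
    fix X assume "X \<in> Fl // FR"
    then show "finite X" using Union_quotient[OF FR_equiv] finFl
      by (metis Sup_upper finite_subset)
  qed
  finally show ?thesis .
qed

lemma finQ: "finite (Fl // FR)"
  using finFl by (simp add: finite_quotient[OF finFl] FR_equiv equiv_type)

lemma faces_lower:
  assumes "\<And>X. X \<in> Fl // FR \<Longrightarrow> 8 \<le> card X"
  shows "8 * num_faces E rot tw \<le> card Fl"
proof -
  have "8 * num_faces E rot tw = (\<Sum>X\<in>Fl // FR. 8)" by (simp add: num_faces_def)
  also have "\<dots> \<le> (\<Sum>X\<in>Fl // FR. card X)" using assms by (intro sum_mono) auto
  finally show ?thesis using sum_classes by simp
qed

lemma faces_exact:
  assumes "\<And>X. X \<in> Fl // FR \<Longrightarrow> card X = 8"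
  shows "8 * num_faces E rot tw = card Fl"
proof -
  have "8 * num_faces E rot tw = (\<Sum>X\<in>Fl // FR. 8)" by (simp add: num_faces_def)
  also have "\<dots> = (\<Sum>X\<in>Fl // FR. card X)" using assms by (intro sum.cong) auto
  finally show ?thesis using sum_classes by simp
qed

lemma rot_nofix:
  assumes v: "v \<in> V" and u: "u \<in> nbrs E v" and w: "w \<in> nbrs E v" "w \<noteq> u"
  shows "rot v u \<noteq> u" "inv (rot v) u \<noteq> u"
proof -
  have tr: "\<exists>k. (rot v ^^ k) u = w" using rotn v u w by (auto simp: is_rotation_def)
  show nf: "rot v u \<noteq> u"
  proof
    assume h: "rot v u = u"
    have "(rot v ^^ k) u = u" for k by (induction k) (simp_all add: h)
    then show False using tr w by auto
  qed
  show "inv (rot v) u \<noteq> u"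
  proof
    assume "inv (rot v) u = u"
    then have "rot v (inv (rot v) u) = rot v u" by simp
    then show False using permutes_inverses(1)[OF perm[OF v]] nf by simp
  qed
qed

end

context emb begin

lemma T1_step:
  assumes deg2: "\<And>v. v \<in> V \<Longrightarrow> \<exists>u w. u \<noteq> w \<and> u \<in> nbrs E v \<and> w \<in> nbrs E v"
    and x: "(v, u, s) \<in> Fl"
  shows "\<exists>u' s'. T1 (v, u, s) = (v, u', s') \<and> u' \<noteq> u"
proof -
  have vu: "{v, u} \<in> E" using x by (simp add: flags_def)
  then have v: "v \<in> V" using EV by blast
  have u: "u \<in> nbrs E v" using vu by (simp add: nbrs_def)
  obtain w where w: "w \<in> nbrs E v" "w \<noteq> u" using deg2[OF v] by metis
  show ?thesis using rot_nofix[OF v u w] by (cases s) (auto simp: tau1_def)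
qed

lemma class_ge8:
  fixes side :: "'a \<Rightarrow> bool"
  assumes deg2: "\<And>v. v \<in> V \<Longrightarrow> \<exists>u w. u \<noteq> w \<and> u \<in> nbrs E v \<and> w \<in> nbrs E v"
    and side: "\<And>a b. {a, b} \<in> E \<Longrightarrow> side a \<noteq> side b"
    and X: "X \<in> Fl // FR"
  shows "8 \<le> card X"
proof -
  obtain x where x: "x \<in> Fl" and Xx: "X = FR `` {x}" using X by (rule quotientE)
  define x1 where "x1 = T0 x"
  define x2 where "x2 = T1 x1"
  define x3 where "x3 = T0 x2"
  define x4 where "x4 = T1 x3"
  define x5 where "x5 = T0 x4"
  define x6 where "x6 = T1 x5"
  define x7 where "x7 = T0 x6"
  have F: "x1 \<in> Fl" "x2 \<in> Fl" "x3 \<in> Fl" "x4 \<in> Fl" "x5 \<in> Fl" "x6 \<in> Fl" "x7 \<in> Fl"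
    using x by (simp_all add: x1_def x2_def x3_def x4_def x5_def x6_def x7_def tau0_flags T1_flags)
  have r0: "(x, x) \<in> FR" using x by (simp add: face_rel_def)
  have R: "(x, x1) \<in> FR" "(x, x2) \<in> FR" "(x, x3) \<in> FR" "(x, x4) \<in> FR"
          "(x, x5) \<in> FR" "(x, x6) \<in> FR" "(x, x7) \<in> FR"
    using r0 by (simp_all add: x1_def x2_def x3_def x4_def x5_def x6_def x7_def class_closed)
  obtain v u s0 where x0: "x = (v, u, s0)" by (cases x)
  obtain s1 where e1: "x1 = (u, v, s1)" by (simp add: x1_def x0 tau0_simp)
  obtain w s2 where e2: "x2 = (u, w, s2)" and wv: "w \<noteq> v"
    using T1_step[OF deg2, of u v s1] F(1) e1 x2_def by blast
  obtain s3 where e3: "x3 = (w, u, s3)" by (simp add: x3_def e2 tau0_simp)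
  obtain y s4 where e4: "x4 = (w, y, s4)" and yu: "y \<noteq> u"
    using T1_step[OF deg2, of w u s3] F(3) e3 x4_def by blast
  obtain s5 where e5: "x5 = (y, w, s5)" by (simp add: x5_def e4 tau0_simp)
  obtain z s6 where e6: "x6 = (y, z, s6)" and zw: "z \<noteq> w"
    using T1_step[OF deg2, of y w s5] F(5) e5 x6_def by blast
  obtain s7 where e7: "x7 = (z, y, s7)" by (simp add: x7_def e6 tau0_simp)
  have s1: "side v \<noteq> side u" using side x x0 by (simp add: flags_def)
  have s2: "side u \<noteq> side w" using side F(2) e2 by (simp add: flags_def)
  have s3: "side w \<noteq> side y" using side F(4) e4 by (simp add: flags_def)
  have s4: "side y \<noteq> side z" using side F(6) e6 by (simp add: flags_def)
  have sw: "side w = side v" using s1 s2 by (cases "side v"; cases "side u"; cases "side w"; simp)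
  have sy: "side y = side u" using s1 s3 sw by (cases "side v"; cases "side u"; cases "side y"; simp)
  have sz: "side z = side v" using s1 s4 sy by (cases "side v"; cases "side u"; cases "side z"; simp)
  have d: "distinct [x, x1, x2, x3, x4, x5, x6, x7]"
    unfolding x0 e1 e2 e3 e4 e5 e6 e7 using wv yu zw s1 sw sy sz by auto
  have sub: "set [x, x1, x2, x3, x4, x5, x6, x7] \<subseteq> X"
    using R r0 Xx by auto
  have "finite X" using Xx finFl by (metis FR_equiv X finite_subset Sup_upper Union_quotient)
  then have "card (set [x, x1, x2, x3, x4, x5, x6, x7]) \<le> card X" using sub by (rule card_mono)
  then show ?thesis using distinct_card[OF d] by simp
qed

lemma class_le8:
  assumes per: "\<And>x. x \<in> Fl \<Longrightarrow> T1 (T0 (T1 (T0 (T1 (T0 (T1 (T0 x))))))) = x"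
    and X: "X \<in> Fl // FR"
  shows "card X \<le> 8"
proof -
  obtain x where x: "x \<in> Fl" and Xx: "X = FR `` {x}" using X by (rule quotientE)
  define x1 where "x1 = T0 x"
  define x2 where "x2 = T1 x1"
  define x3 where "x3 = T0 x2"
  define x4 where "x4 = T1 x3"
  define x5 where "x5 = T0 x4"
  define x6 where "x6 = T1 x5"
  define x7 where "x7 = T0 x6"
  have F: "x1 \<in> Fl" "x2 \<in> Fl" "x3 \<in> Fl" "x4 \<in> Fl" "x5 \<in> Fl" "x6 \<in> Fl" "x7 \<in> Fl"
    using x by (simp_all add: x1_def x2_def x3_def x4_def x5_def x6_def x7_def tau0_flags T1_flags)
  have p: "T1 x7 = x" using per[OF x] by (simp add: x1_def x2_def x3_def x4_def x5_def x6_def x7_def)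
  have p2: "T1 x = x7" using p T1_T1[OF F(7)] by simp
  define S where "S = set [x, x1, x2, x3, x4, x5, x6, x7]"
  have c0: "T0 y \<in> S" if "y \<in> S" for y
  proof -
    have "y = x \<or> y = x1 \<or> y = x2 \<or> y = x3 \<or> y = x4 \<or> y = x5 \<or> y = x6 \<or> y = x7"
      using that by (simp add: S_def)
    moreover have "T0 x = x1" "T0 x1 = x" "T0 x2 = x3" "T0 x3 = x2" "T0 x4 = x5" "T0 x5 = x4"
      "T0 x6 = x7" "T0 x7 = x6"
      by (simp_all add: x1_def x3_def x5_def x7_def tau0_tau0)
    ultimately show ?thesis unfolding S_def by auto
  qed
  have c1: "T1 y \<in> S" if "y \<in> S" for y
  proof -
    have "y = x \<or> y = x1 \<or> y = x2 \<or> y = x3 \<or> y = x4 \<or> y = x5 \<or> y = x6 \<or> y = x7"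
      using that by (simp add: S_def)
    then show ?thesis
      using p p2 T1_T1[OF F(1)] T1_T1[OF F(3)] T1_T1[OF F(5)]
      unfolding S_def by (auto simp: x2_def x4_def x6_def)
  qed
  have "X \<subseteq> S" unfolding Xx by (rule class_sub[OF _ c0 c1]) (simp add: S_def)
  then have "card X \<le> card S" by (rule card_mono[rotated]) (simp add: S_def)
  also have "\<dots> \<le> 8" unfolding S_def by (rule order_trans[OF card_length]) simp
  finally show ?thesis .
qed

end

definition TL :: "nat list list" where
  "TL = [[1,2,3],[1,2,4],[1,2,5],[1,2,6],[1,3,4],[1,3,5],[1,3,6],[1,4,5],[1,4,6],[1,5,6],
         [2,3,4],[2,3,5],[2,3,6],[2,4,5],[2,4,6],[2,5,6],[3,4,5],[3,4,6],[3,5,6],[4,5,6]]"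

definition RL :: "nat list list" where
  "RL = [[7, 9, 12, 11, 15, 10, 8, 14, 16, 13],
         [7, 9, 22, 21, 20, 18, 19, 10, 8, 17],
         [7, 13, 19, 18, 23, 11, 12, 25, 24, 17],
         [8, 14, 23, 11, 15, 26, 20, 21, 24, 17],
         [9, 12, 25, 16, 14, 23, 18, 20, 26, 22],
         [10, 15, 26, 22, 21, 24, 25, 16, 13, 19]]"

definition twl :: "(nat \<times> nat) list" where
  "twl = [(1, 7), (1, 10), (1, 12), (1, 13), (2, 8), (2, 9), (2, 17), (2, 18), (2, 21), (3, 7),
     (3, 12), (3, 13), (3, 18), (3, 23), (3, 24), (4, 8), (4, 11), (4, 14), (4, 15), (4, 17),
     (4, 21), (4, 26), (5, 9), (5, 18), (5, 23), (5, 25), (5, 26), (6, 10), (6, 16), (6, 19),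
     (6, 22), (6, 24)]"

definition trl :: "nat \<Rightarrow> nat list" where
  "trl n = (if 7 \<le> n \<and> n \<le> 26 then TL ! (n - 7) else [])"

definition Lc :: "nat \<Rightarrow> nat list" where
  "Lc a = (if 1 \<le> a \<and> a \<le> 6 then RL ! (a - 1) else trl a)"

definition twc :: "nat set \<Rightarrow> bool" where
  "twc e = (\<exists>(p, q) \<in> set twl. e = {p, q})"

definition T0c :: "nat \<times> nat \<times> bool \<Rightarrow> nat \<times> nat \<times> bool" where
  "T0c x = (case x of (a, b, s) \<Rightarrow> (b, a, if twc {a, b} then s else \<not> s))"

definition T1c :: "nat \<times> nat \<times> bool \<Rightarrow> nat \<times> nat \<times> bool" where
  "T1c x = (case x of (a, b, s) \<Rightarrow>
     (if s then (a, cyc (Lc a) b, False) else (a, cyc (rev (Lc a)) b, True)))"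

lemma tww: "twc {a, b} = ((a, b) \<in> set twl \<or> (b, a) \<in> set twl)"
  unfolding twc_def by (auto simp: doubleton_eq_iff)

lemmas Lc_simps = Lc_def trl_def RL_def TL_def
lemma Lc_vals:
  "Lc 1 = [7, 9, 12, 11, 15, 10, 8, 14, 16, 13]"
  "Lc 2 = [7, 9, 22, 21, 20, 18, 19, 10, 8, 17]"
  "Lc 3 = [7, 13, 19, 18, 23, 11, 12, 25, 24, 17]"
  "Lc 4 = [8, 14, 23, 11, 15, 26, 20, 21, 24, 17]"
  "Lc 5 = [9, 12, 25, 16, 14, 23, 18, 20, 26, 22]"
  "Lc 6 = [10, 15, 26, 22, 21, 24, 25, 16, 13, 19]"
  "Lc 7 = [1, 2, 3]"
  "Lc 8 = [1, 2, 4]"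
  "Lc 9 = [1, 2, 5]"
  "Lc 10 = [1, 2, 6]"
  "Lc 11 = [1, 3, 4]"
  "Lc 12 = [1, 3, 5]"
  "Lc 13 = [1, 3, 6]"
  "Lc 14 = [1, 4, 5]"
  "Lc 15 = [1, 4, 6]"
  "Lc 16 = [1, 5, 6]"
  "Lc 17 = [2, 3, 4]"
  "Lc 18 = [2, 3, 5]"
  "Lc 19 = [2, 3, 6]"
  "Lc 20 = [2, 4, 5]"
  "Lc 21 = [2, 4, 6]"
  "Lc 22 = [2, 5, 6]"
  "Lc 23 = [3, 4, 5]"
  "Lc 24 = [3, 4, 6]"
  "Lc 25 = [3, 5, 6]"
  "Lc 26 = [4, 5, 6]"
  by (simp_all add: Lc_simps)

lemma cyc_Cons: "cyc (a # L) x = (case map_of (zip (a # L) (L @ [a])) x of None \<Rightarrow> x | Some y \<Rightarrow> y)"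
  by (simp add: cyc_def)

lemma Lc_one: "Lc (Suc 0) = [7, 9, 12, 11, 15, 10, 8, 14, 16, 13]"
  using Lc_vals(1) by simp

lemma check_nat:
  "\<forall>n \<in> set [7..<27]. \<forall>i \<in> set (trl n). \<forall>s.
     T1c (T0c (T1c (T0c (T1c (T0c (T1c (T0c (i, n, s)))))))) = (i, n, s) \<and>
     T1c (T0c (T1c (T0c (T1c (T0c (T1c (T0c (n, i, s)))))))) = (n, i, s)"
  by (simp add: upt_rec all_bool_eq trl_def TL_def Lc_vals Lc_one T0c_def T1c_def tww twl_def cyc_Cons)

definition tri :: "nat \<Rightarrow> nat set" where "tri n = set (trl n)"

definition fm :: "nat \<Rightarrow> nat + nat set" where
  "fm n = (if 7 \<le> n \<and> n \<le> 26 then Inr (tri n) else Inl n)"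

definition Ec :: "nat set set" where
  "Ec = {{i, n} | i n. n \<in> {7..26} \<and> i \<in> tri n}"

definition rotL :: "nat + nat set \<Rightarrow> nat + nat set \<Rightarrow> nat + nat set" where
  "rotL v = cyc (map fm (Lc (inv fm v)))"

definition twL :: "(nat + nat set) set \<Rightarrow> bool" where
  "twL e = twc (fm -` e)"

lemma range726: "(n \<in> {7..26}) = (n \<in> set [7..<27])" unfolding set_upt by auto
lemma range126: "(n \<in> {1..26}) = (n \<in> set [1..<27])" unfolding set_upt by auto

lemma trl_props_all:
  "\<forall>n \<in> set [7..<27]. sorted (trl n) \<and> distinct (trl n) \<and> length (trl n) = 3 \<and> (\<forall>i \<in> set (trl n). 1 \<le> i \<and> i \<le> 6)"
  by (simp add: upt_rec trl_def TL_def)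

lemma trl_props:
  assumes "n \<in> {7..26}"
  shows "sorted (trl n)" "distinct (trl n)" "length (trl n) = 3" "tri n \<subseteq> {1..6}"
proof -
  have "n \<in> set [7..<27]" using assms unfolding range726 .
  from bspec[OF trl_props_all this]
  have h: "sorted (trl n)" "distinct (trl n)" "length (trl n) = 3" "\<forall>i \<in> set (trl n). 1 \<le> i \<and> i \<le> 6"
    by blast+
  then show "sorted (trl n)" "distinct (trl n)" "length (trl n) = 3" by blast+
  show "tri n \<subseteq> {1..6}" unfolding tri_def using h(4) by auto
qed

lemma card_tri: "n \<in> {7..26} \<Longrightarrow> card (tri n) = 3"
  using trl_props[of n] by (simp add: tri_def distinct_card)

lemma trl_distinct_map: "distinct (map trl [7..<27])"
  by (simp add: upt_rec trl_def TL_def)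

lemma inj_trl: "inj_on trl {7..26}"
proof -
  have "inj_on trl (set [7..<27])" using trl_distinct_map unfolding distinct_map by blast
  moreover have "set [7..<27] = {7..26::nat}" unfolding set_upt by auto
  ultimately show ?thesis by metis
qed

lemma inj_tri: "inj_on tri {7..26}"
proof (rule inj_onI)
  fix m n assume m: "m \<in> {7..26}" and n: "n \<in> {7..26}" and e: "tri m = tri n"
  have "trl m = trl n"
    using trl_props[OF m] trl_props[OF n] e unfolding tri_def
    by (intro sorted_distinct_set_unique) auto
  then show "m = n" using inj_trl m n by (auto dest: inj_onD)
qed

lemma inj_fm: "inj fm"
proof (rule injI)
  fix a b assume e: "fm a = fm b"
  show "a = b"
  proof (cases "7 \<le> a \<and> a \<le> 26")
    case True
    then have "7 \<le> b \<and> b \<le> 26" using e by (auto simp: fm_def split: if_splits)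
    then show ?thesis using True e inj_tri by (auto simp: fm_def dest: inj_onD)
  next
    case False
    then have "\<not> (7 \<le> b \<and> b \<le> 26)" using e by (auto simp: fm_def split: if_splits)
    then show ?thesis using False e by (auto simp: fm_def)
  qed
qed

lemma K63: "K63_edges = tri ` {7..26}"
proof -
  have c: "card K63_edges = 20"
  proof -
    have "card K63_edges = card {1..6::nat} choose 3"
      unfolding K63_edges_def by (rule n_subsets) simp
    also have "\<dots> = 20" by (simp add: numeral_eq_Suc)
    finally show ?thesis .
  qed
  have sub: "tri ` {7..26} \<subseteq> K63_edges"
  proof (rule image_subsetI)
    fix n :: nat assume n: "n \<in> {7..26}"
    show "tri n \<in> K63_edges" using trl_props(4)[OF n] card_tri[OF n] by (simp add: K63_edges_def)
  qed
  have c2: "card (tri ` {7..26}) = 20"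
    using inj_tri by (simp add: card_image)
  have fin: "finite K63_edges" unfolding K63_edges_def by simp
  show ?thesis using card_subset_eq[OF fin sub] c c2 by simp
qed

lemma fm_small: "n \<le> 6 \<Longrightarrow> fm n = Inl n" by (simp add: fm_def)
lemma fm_big: "n \<in> {7..26} \<Longrightarrow> fm n = Inr (tri n)" by (simp add: fm_def)

lemma V_eq: "levi_vertices K63_vertices K63_edges = fm ` {1..26}"
proof -
  have a: "{1..26::nat} = {1..6} \<union> {7..26}" by auto
  have b: "fm ` {1..6} = Inl ` {1..6}" by (rule image_cong) (auto simp: fm_small)
  have c: "fm ` {7..26} = Inr ` tri ` {7..26}"
    unfolding image_image by (rule image_cong) (auto simp: fm_big)
  show ?thesis unfolding levi_vertices_def K63_vertices_def K63 a image_Un b c ..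
qed

lemma fm_pair: "n \<in> {7..26} \<Longrightarrow> i \<in> tri n \<Longrightarrow> fm ` {i, n} = {Inl i, Inr (tri n)}"
  using trl_props(4)[of n] by (auto simp: fm_small fm_big)

lemma E_eq: "levi_edges K63_vertices K63_edges = (image fm) ` Ec"
proof (rule set_eqI, rule iffI)
  fix e assume "e \<in> levi_edges K63_vertices K63_edges"
  then obtain i t where e: "e = {Inl i, Inr t}" and t: "t \<in> K63_edges" and it: "i \<in> t"
    unfolding levi_edges_def by (auto simp only: mem_Collect_eq)
  obtain n where n: "n \<in> {7..26}" and tn: "t = tri n" using t unfolding K63 by (auto simp only: image_iff)
  have "e = fm ` {i, n}" using fm_pair[OF n, of i] it tn e by (simp only:)
  moreover have "{i, n} \<in> Ec" using n it tn unfolding Ec_def by (auto simp only: mem_Collect_eq)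
  ultimately show "e \<in> (image fm) ` Ec" by (simp only: image_eqI)
next
  fix e assume "e \<in> (image fm) ` Ec"
  then obtain i n where e: "e = fm ` {i, n}" and n: "n \<in> {7..26}" and it: "i \<in> tri n"
    unfolding Ec_def by (auto simp only: mem_Collect_eq image_iff)
  have e2: "e = {Inl i, Inr (tri n)}" using fm_pair[OF n it] e by (simp only:)
  have "i \<in> K63_vertices" using trl_props(4)[OF n] it unfolding K63_vertices_def by (rule subsetD)
  moreover have "tri n \<in> K63_edges" unfolding K63 using n by (rule imageI)
  ultimately have "{Inl i, Inr (tri n)} \<in> levi_edges K63_vertices K63_edges"
    unfolding levi_edges_def using it by (auto simp only: mem_Collect_eq)
  then show "e \<in> levi_edges K63_vertices K63_edges" using e2 by (simp only:)
qed

lemma card_V: "card (fm ` {1..26}) = 26"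
  using inj_fm by (simp add: card_image inj_on_subset[of fm UNIV])

lemma Ec_Sigma: "Ec = (\<lambda>(n, i). {i, n}) ` (SIGMA n:{7..26}. tri n)"
proof (rule set_eqI, rule iffI)
  fix e assume "e \<in> Ec"
  then obtain i n where "e = {i, n}" "n \<in> {7..26}" "i \<in> tri n" unfolding Ec_def by blast
  then show "e \<in> (\<lambda>(n, i). {i, n}) ` (SIGMA n:{7..26}. tri n)" by force
next
  fix e assume "e \<in> (\<lambda>(n, i). {i, n}) ` (SIGMA n:{7..26}. tri n)"
  then obtain p where p: "p \<in> (SIGMA n:{7..26}. tri n)" "e = (\<lambda>(n, i). {i, n}) p" by blast
  obtain n i where "p = (n, i)" by (cases p)
  then have "e = {i, n}" "n \<in> {7..26}" "i \<in> tri n" using p by auto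
  then show "e \<in> Ec" unfolding Ec_def by blast
qed

lemma Ec_small: assumes "n \<in> {7..26}" "i \<in> tri n" shows "1 \<le> i \<and> i \<le> 6"
  using trl_props(4)[OF assms(1)] assms(2) by auto

lemma inj_Ec: "inj_on (\<lambda>(n, i). {i, n}) (SIGMA n:{7..26}. tri n)"
proof (rule inj_onI, clarify)
  fix n i n' i' assume n: "n \<in> {7..26}" and i: "i \<in> tri n" and n': "n' \<in> {7..26}" and i': "i' \<in> tri n'"
    and e: "{i, n} = {i', n'}"
  have "i \<le> 6" "i' \<le> 6" using Ec_small[OF n i] Ec_small[OF n' i'] by auto
  then show "n = n' \<and> i = i'" using e n n' by (auto simp: doubleton_eq_iff)
qed

lemma fin_Ec: "finite Ec" unfolding Ec_Sigma by (simp add: tri_def)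

lemma card_Ec: "card Ec = 60"
proof -
  have "card Ec = card (SIGMA n:{7..26}. tri n)" unfolding Ec_Sigma using inj_Ec by (rule card_image)
  also have "\<dots> = (\<Sum>n\<in>{7..26}. card (tri n))" by (rule card_SigmaI) (auto simp: tri_def)
  also have "\<dots> = (\<Sum>n\<in>{7..26::nat}. 3)" by (rule sum.cong) (auto simp: card_tri)
  finally show ?thesis by simp
qed

lemma inj_img: "inj (image fm)"
  using inj_fm by (auto simp: inj_def inj_image_eq_iff)

lemma card_E: "card ((image fm) ` Ec) = 60"
  using card_Ec inj_img by (simp add: card_image inj_on_subset[of "image fm" UNIV])

lemma fin_E: "finite ((image fm) ` Ec)" using fin_Ec by simp

lemma Ec_elem: "e \<in> Ec \<Longrightarrow> \<exists>i n. e = {i, n} \<and> n \<in> {7..26} \<and> i \<in> tri n"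
  unfolding Ec_def by blast

lemma E_elem: "e \<in> (image fm) ` Ec \<Longrightarrow> \<exists>i n. e = {fm i, fm n} \<and> n \<in> {7..26} \<and> i \<in> tri n"
  using Ec_elem by fastforce

lemma nbrs_img: "nbrs ((image fm) ` Ec) (fm a) = fm ` nbrs Ec a"
proof (rule set_eqI, rule iffI)
  fix u assume "u \<in> nbrs ((image fm) ` Ec) (fm a)"
  then have "{fm a, u} \<in> (image fm) ` Ec" by (simp add: nbrs_def)
  then obtain e where e: "e \<in> Ec" "{fm a, u} = fm ` e" by blast
  then have "u \<in> fm ` e" by blast
  then obtain b where b: "u = fm b" by blast
  have "fm ` {a, b} = fm ` e" using e b by simp
  then have "{a, b} = e" by (simp only: inj_image_eq_iff[OF inj_fm])
  then have "b \<in> nbrs Ec a" using e by (simp add: nbrs_def)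
  then show "u \<in> fm ` nbrs Ec a" using b by blast
next
  fix u assume "u \<in> fm ` nbrs Ec a"
  then obtain b where b: "u = fm b" "{a, b} \<in> Ec" by (auto simp: nbrs_def)
  then have "fm ` {a, b} \<in> (image fm) ` Ec" by blast
  then show "u \<in> nbrs ((image fm) ` Ec) (fm a)" using b by (simp add: nbrs_def)
qed

lemma Lc_filter_all:
  "\<forall>a \<in> set [1..<7]. filter (\<lambda>n. a \<in> set (trl n)) [7..<27] = sort (Lc a)"
  by (simp add: upt_rec trl_def TL_def Lc_def RL_def)

lemma Lc_big: "7 \<le> a \<Longrightarrow> Lc a = trl a" by (simp add: Lc_def)

lemma nbrs_Ec: assumes a: "a \<in> {1..26}" shows "nbrs Ec a = set (Lc a)"
proof (cases "7 \<le> a")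
  case True
  have "u \<in> nbrs Ec a \<longleftrightarrow> u \<in> tri a" for u
  proof
    assume "u \<in> nbrs Ec a"
    then obtain i n where e: "{a, u} = {i, n}" "n \<in> {7..26}" "i \<in> tri n"
      unfolding nbrs_def Ec_def by blast
    have "i \<le> 6" using Ec_small[OF e(2,3)] by simp
    then have "a = n" "u = i" using e(1) True by (auto simp: doubleton_eq_iff)
    then show "u \<in> tri a" using e by simp
  next
    assume "u \<in> tri a"
    then have "{u, a} \<in> Ec" using True a unfolding Ec_def by auto
    then show "u \<in> nbrs Ec a" by (simp add: nbrs_def insert_commute)
  qed
  then show ?thesis using True by (auto simp: Lc_big tri_def)
next
  case False
  have "u \<in> nbrs Ec a \<longleftrightarrow> u \<in> {n \<in> {7..26}. a \<in> tri n}" for u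
  proof
    assume "u \<in> nbrs Ec a"
    then obtain i n where e: "{a, u} = {i, n}" "n \<in> {7..26}" "i \<in> tri n"
      unfolding nbrs_def Ec_def by blast
    then have "a = i" "u = n" using False by (auto simp: doubleton_eq_iff)
    then show "u \<in> {n \<in> {7..26}. a \<in> tri n}" using e by simp
  next
    assume "u \<in> {n \<in> {7..26}. a \<in> tri n}"
    then show "u \<in> nbrs Ec a" unfolding nbrs_def Ec_def by blast
  qed
  then have "nbrs Ec a = {n \<in> {7..26}. a \<in> tri n}" by blast
  also have "\<dots> = set (filter (\<lambda>n. a \<in> set (trl n)) [7..<27])"
    unfolding set_filter set_upt tri_def by auto
  also have "\<dots> = set (Lc a)"
  proof -
    have "a \<in> set [1..<7]" using a False unfolding set_upt by auto
    from bspec[OF Lc_filter_all this] show ?thesis by (metis set_sort)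
  qed
  finally show ?thesis .
qed

lemma Lc_props_all: "\<forall>a \<in> set [1..<27]. distinct (Lc a) \<and> 2 \<le> length (Lc a)"
  by (simp add: upt_rec trl_def TL_def Lc_def RL_def)

lemma Lc_props: "a \<in> {1..26} \<Longrightarrow> distinct (Lc a) \<and> 2 \<le> length (Lc a)"
  using bspec[OF Lc_props_all, of a] unfolding set_upt by auto

lemma Lc_distinct: "distinct (Lc a)"
proof (cases "a \<in> {1..26}")
  case True then show ?thesis using Lc_props by blast
next
  case False then have "Lc a = []" by (auto simp: Lc_def trl_def)
  then show ?thesis by simp
qed

lemma nbrs_E: "a \<in> {1..26} \<Longrightarrow> nbrs ((image fm) ` Ec) (fm a) = set (map fm (Lc a))"
  using nbrs_img nbrs_Ec by simp

lemma rotL_fm: "rotL (fm a) = cyc (map fm (Lc a))"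
  using inj_fm by (simp add: rotL_def)

lemma rot_ok: "is_rotation (fm ` {1..26}) ((image fm) ` Ec) rotL"
  unfolding is_rotation_def
proof
  fix v assume "v \<in> fm ` {1..26}"
  then obtain a where a: "a \<in> {1..26}" and v: "v = fm a" by blast
  have d: "distinct (map fm (Lc a))" using Lc_distinct inj_fm by (simp add: distinct_map inj_on_subset[of fm UNIV])
  show "rotL v permutes nbrs ((image fm) ` Ec) v \<and>
        (\<forall>u\<in>nbrs ((image fm) ` Ec) v. \<forall>w\<in>nbrs ((image fm) ` Ec) v. \<exists>k. (rotL v ^^ k) u = w)"
    unfolding v nbrs_E[OF a] rotL_fm using cyc_permutes[OF d] cyc_trans[OF d] by blast
qed

lemma vimage_pair: "fm -` {fm a, fm b} = {a, b}"
  using inj_fm by (auto simp: inj_eq)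

lemma tau0L: "tau0 twL (fm a, fm b, s) = (fm b, fm a, if twc {a, b} then s else \<not> s)"
  by (simp add: tau0_def twL_def vimage_pair)

lemma tau1L: "tau1 rotL (fm a, fm b, s) =
   (if s then (fm a, fm (cyc (Lc a) b), False) else (fm a, fm (cyc (rev (Lc a)) b), True))"
proof -
  have i: "inv (cyc (map fm (Lc a))) = cyc (map fm (rev (Lc a)))"
    using Lc_distinct[of a] inj_fm
    by (simp add: inv_cyc distinct_map inj_on_subset[of fm UNIV] rev_map)
  show ?thesis by (simp add: tau1_def i rotL_fm cyc_map[OF inj_fm])
qed

definition FF :: "nat \<times> nat \<times> bool \<Rightarrow> (nat + nat set) \<times> (nat + nat set) \<times> bool" where
  "FF x = (case x of (a, b, s) \<Rightarrow> (fm a, fm b, s))"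

lemma FF_T0: "tau0 twL (FF x) = FF (T0c x)"
  by (cases x) (simp add: FF_def T0c_def tau0L)

lemma FF_T1: "tau1 rotL (FF x) = FF (T1c x)"
  by (cases x) (simp add: FF_def T1c_def tau1L)

lemma per_L:
  assumes x: "x \<in> flags ((image fm) ` Ec)"
  shows "tau1 rotL (tau0 twL (tau1 rotL (tau0 twL (tau1 rotL (tau0 twL (tau1 rotL (tau0 twL x))))))) = x"
proof -
  obtain v u s where xe: "x = (v, u, s)" by (cases x)
  have "{v, u} \<in> (image fm) ` Ec" using x xe by (simp add: flags_def)
  then obtain i n where e: "{v, u} = {fm i, fm n}" and n: "n \<in> {7..26}" and i: "i \<in> tri n"
    using E_elem by blast
  have n': "n \<in> set [7..<27]" using n unfolding range726 .
  have i': "i \<in> set (trl n)" using i by (simp add: tri_def)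
  have c: "\<forall>s. T1c (T0c (T1c (T0c (T1c (T0c (T1c (T0c (i, n, s)))))))) = (i, n, s) \<and>
     T1c (T0c (T1c (T0c (T1c (T0c (T1c (T0c (n, i, s)))))))) = (n, i, s)"
    using bspec[OF bspec[OF check_nat n'] i'] .
  have "x = FF (i, n, s) \<or> x = FF (n, i, s)" using e xe by (auto simp: FF_def doubleton_eq_iff)
  then show ?thesis
  proof
    assume "x = FF (i, n, s)"
    then show ?thesis using c by (simp only: FF_T0 FF_T1)
  next
    assume "x = FF (n, i, s)"
    then show ?thesis using c by (simp only: FF_T0 FF_T1)
  qed
qed

abbreviation "VV \<equiv> fm ` {1..26}"
abbreviation "EE \<equiv> (image fm) ` Ec"

lemma edge_in: "n \<in> {7..26} \<Longrightarrow> i \<in> tri n \<Longrightarrow> {fm i, fm n} \<in> EE"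
proof -
  assume "n \<in> {7..26}" "i \<in> tri n"
  then have "{i, n} \<in> Ec" unfolding Ec_def by blast
  then have "fm ` {i, n} \<in> EE" by blast
  then show ?thesis by simp
qed

lemma nonor: "nonorientable_scheme VV EE twL"
  unfolding nonorientable_scheme_def
proof
  assume "\<exists>\<sigma> :: nat + nat set \<Rightarrow> bool. \<forall>u v. {u, v} \<in> EE \<longrightarrow> twL {u, v} = (\<sigma> u \<noteq> \<sigma> v)"
  then obtain \<sigma> :: "nat + nat set \<Rightarrow> bool" where h: "\<And>u v. {u, v} \<in> EE \<Longrightarrow> twL {u, v} = (\<sigma> u \<noteq> \<sigma> v)" by blast
  have t: "1 \<in> tri 13" "1 \<in> tri 10" "6 \<in> tri 10" "6 \<in> tri 13"
    by (simp_all add: tri_def trl_def TL_def)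
  have r: "(13::nat) \<in> {7..26}" "(10::nat) \<in> {7..26}" by simp_all
  have w: "twL {fm 1, fm 13}" "twL {fm 1, fm 10}" "twL {fm 6, fm 10}" "\<not> twL {fm 6, fm 13}"
    by (simp_all add: twL_def vimage_pair tww twl_def)
  have "\<sigma> (fm 1) \<noteq> \<sigma> (fm 13)" using h[OF edge_in[OF r(1) t(1)]] w(1) by simp
  moreover have "\<sigma> (fm 1) \<noteq> \<sigma> (fm 10)" using h[OF edge_in[OF r(2) t(2)]] w(2) by simp
  moreover have "\<sigma> (fm 6) \<noteq> \<sigma> (fm 10)" using h[OF edge_in[OF r(2) t(3)]] w(3) by simp
  moreover have "\<sigma> (fm 6) = \<sigma> (fm 13)" using h[OF edge_in[OF r(1) t(4)]] w(4) by simp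
  ultimately show False by (cases "\<sigma> (fm 1)"; cases "\<sigma> (fm 6)"; cases "\<sigma> (fm 10)"; cases "\<sigma> (fm 13)"; simp)
qed

lemma E2: "\<forall>e\<in>EE. \<exists>a b. a \<noteq> b \<and> e = {a, b}"
proof
  fix e assume "e \<in> EE"
  then obtain i n where e: "e = {fm i, fm n}" and n: "n \<in> {7..26}" and i: "i \<in> tri n"
    using E_elem by blast
  have "i \<noteq> n" using Ec_small[OF n i] n by auto
  then have "fm i \<noteq> fm n" using inj_fm by (simp add: inj_eq)
  then show "\<exists>a b. a \<noteq> b \<and> e = {a, b}" using e by (intro exI[of _ "fm i"] exI[of _ "fm n"]) simp
qed

lemma EV: "{a, b} \<in> EE \<Longrightarrow> a \<in> VV"
proof -
  assume "{a, b} \<in> EE"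
  then obtain i n where e: "{a, b} = {fm i, fm n}" and n: "n \<in> {7..26}" and i: "i \<in> tri n"
    using E_elem by blast
  have "i \<in> {1..26}" "n \<in> {1..26}" using Ec_small[OF n i] n by auto
  moreover have "a = fm i \<or> a = fm n" using e by (auto simp: doubleton_eq_iff)
  ultimately show "a \<in> VV" by auto
qed

lemma deg2: "v \<in> VV \<Longrightarrow> \<exists>u w. u \<noteq> w \<and> u \<in> nbrs EE v \<and> w \<in> nbrs EE v"
proof -
  assume "v \<in> VV"
  then obtain a where a: "a \<in> {1..26}" and v: "v = fm a" by blast
  have d: "distinct (Lc a)" "2 \<le> length (Lc a)" using Lc_props[OF a] by auto
  have ne: "Lc a \<noteq> []" using d by auto
  have "Lc a ! 0 \<noteq> Lc a ! 1" using d ne nth_eq_iff_index_eq[of "Lc a" 0 1] by simp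
  then have n1: "fm (Lc a ! 0) \<noteq> fm (Lc a ! 1)" using inj_fm by (simp add: inj_eq)
  have l: "0 < length (Lc a)" "1 < length (Lc a)" using d by linarith+
  have "Lc a ! 0 \<in> set (Lc a)" "Lc a ! 1 \<in> set (Lc a)"
    using nth_mem[OF l(1)] nth_mem[OF l(2)] by simp_all
  then have m: "fm (Lc a ! 0) \<in> set (map fm (Lc a))" "fm (Lc a ! 1) \<in> set (map fm (Lc a))"
    by simp_all
  show ?thesis unfolding v nbrs_E[OF a] using n1 m by blast
qed

lemma side: "{a, b} \<in> EE \<Longrightarrow> isl a \<noteq> isl b"
proof -
  assume "{a, b} \<in> EE"
  then obtain i n where e: "{a, b} = {fm i, fm n}" and n: "n \<in> {7..26}" and i: "i \<in> tri n"
    using E_elem by blast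
  have "{a, b} = {Inl i, Inr (tri n)}" using e fm_pair[OF n i] by simp
  then show ?thesis by (auto simp: doubleton_eq_iff)
qed

lemma card_flags_E: "card (flags EE) = 240"
  using card_flags[OF fin_E E2] card_E by simp

lemma lower:
  assumes r: "is_rotation VV EE rot"
  shows "6 \<le> euler_genus VV EE rot tw"
proof -
  interpret emb VV EE rot tw by (rule emb.intro[OF fin_E E2 EV r])
  have "8 * num_faces EE rot tw \<le> 240"
    using faces_lower[OF class_ge8[OF deg2 side]] card_flags_E by simp
  then show ?thesis unfolding euler_genus_def using card_V card_E by simp
qed

lemma upper: "euler_genus VV EE rotL twL = 6"
proof -
  interpret emb VV EE rotL twL by (rule emb.intro[OF fin_E E2 EV rot_ok])
  have "card X = 8" if "X \<in> flags EE // face_rel EE rotL twL" for X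
    using class_ge8[OF deg2 side that] class_le8[OF per_L that] by simp
  then have "8 * num_faces EE rotL twL = 240" using faces_exact card_flags_E by simp
  then show ?thesis unfolding euler_genus_def using card_V card_E by simp
qed

theorem lemma3p2:
  shows "hypergraph_nonorientable_genus K63_vertices K63_edges = 6"
  unfolding hypergraph_nonorientable_genus_def V_eq E_eq nonorientable_genus_def
proof (rule Least_equality)
  show "\<exists>rot tw. is_rotation VV EE rot \<and> nonorientable_scheme VV EE tw \<and> int 6 = euler_genus VV EE rot tw"
    using rot_ok nonor upper by (intro exI[of _ rotL] exI[of _ twL]) simp
next
  fix c assume "\<exists>rot tw. is_rotation VV EE rot \<and> nonorientable_scheme VV EE tw \<and> int c = euler_genus VV EE rot tw"
  then obtain rot tw where r: "is_rotation VV EE rot" and c: "int c = euler_genus VV EE rot tw" by blast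
  have "6 \<le> int c" using lower[OF r, of tw] c by simp
  then show "6 \<le> c" by simp
qed

end
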